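(* For any $0<\theta<1$, the Assouad spectrum $\dim_A^\theta$ is not stable with respect to graph sums: there exist continuous functions $g,h$ defined on a common interval $I$ such that $$\dim_A^\theta(\operatorname{Graph}(g+h))>\max\{\dim_A^\theta(\operatorname{Graph}(g)),\dim_A^\theta(\operatorname{Graph}(h))\}.$$
   Context: A notion of dimension $D$ is called stable with respect to graph sums if $D(\operatorname{Graph}(g+h))\le\max\{D(\operatorname{Graph}(g)),D(\operatorname{Graph}(h))\}$ for all continuous functions $g,h$ defined on a common interval $I$, where $\operatorname{Graph}(g)=\{(t,g(t)):t\in I\}$. For a bounded $F\subset\mathbb{R}^2$ and $r>0$, $N(F,r)$ is the least number of sets of diameter at most $r$ needed to cover $F$; $D(\mathbf z,R)$ is the closed disc of radius $R$ about $\mathbf z$. For $E\subset\mathbb{R}^2$ and $\theta\in(0,1)$, the Assouad spectrum is $\dim_A^\theta(E)=\inf\{\gamma>0:\exists C>0 \text{ s.t. } N(D(\mathbf z,R)\cap E,r)\le C(R/r)^\gamma \text{ for all } 0<r=R^{1/\theta}<R<1,\ \mathbf z\in E\}$. *)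

theory Defs
  imports "HOL-Analysis.Analysis"
begin

text \<open>Points of the plane are pairs of reals; the product metric on real \<times> real is the
Euclidean one.\<close>

definition cover_number :: "(real \<times> real) set \<Rightarrow> real \<Rightarrow> nat" where
  "cover_number F r = (LEAST n. \<exists>\<C>. finite \<C> \<and> card \<C> = n \<and> F \<subseteq> \<Union>\<C> \<and>
      (\<forall>A\<in>\<C>. bounded A \<and> diameter A \<le> r))"

definition assouad_spectrum :: "real \<Rightarrow> (real \<times> real) set \<Rightarrow> real" where
  "assouad_spectrum \<theta> E = Inf {\<gamma>. \<gamma> > 0 \<and> (\<exists>C>0. \<forall>R z. 0 < R \<and> R < 1 \<and> z \<in> E \<longrightarrow>
      real (cover_number (cball z R \<inter> E) (R powr (1 / \<theta>))) \<le> C * (R / R powr (1 / \<theta>)) powr \<gamma>)}"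

definition graph_of :: "real set \<Rightarrow> (real \<Rightarrow> real) \<Rightarrow> (real \<times> real) set" where
  "graph_of I g = (\<lambda>t. (t, g t)) ` I"

end

theory Submission
  imports Defs
begin

definition spec_set :: "real \<Rightarrow> (real \<times> real) set \<Rightarrow> real set" where
  "spec_set \<theta> E = {\<gamma>. \<gamma> > 0 \<and> (\<exists>C>0. \<forall>R z. 0 < R \<and> R < 1 \<and> z \<in> E \<longrightarrow>
      real (cover_number (cball z R \<inter> E) (R powr (1 / \<theta>))) \<le> C * (R / R powr (1 / \<theta>)) powr \<gamma>)}"

theorem corollary4p8:
  fixes \<theta> :: real
  assumes "0 < \<theta>" and "\<theta> < 1"
  shows "\<exists>(I :: real set) (g :: real \<Rightarrow> real) (h :: real \<Rightarrow> real).
           is_interval I \<and> continuous_on I g \<and> continuous_on I h \<and>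
           assouad_spectrum \<theta> (graph_of I (\<lambda>t. g t + h t)) >
             max (assouad_spectrum \<theta> (graph_of I g)) (assouad_spectrum \<theta> (graph_of I h))"
proof -
  have cover_le: "cover_number F r \<le> card K" if assms: "finite K" "F \<subseteq> (\<Union>k\<in>K. A k)" "\<forall>k\<in>K. bounded (A k) \<and> diameter (A k) \<le> r" for A :: "'k \<Rightarrow> (real \<times> real) set" and K F r
  proof -
    have "cover_number F r \<le> card (A ` K)" unfolding cover_number_def
      by (rule Least_le) (use assms in auto)
    also have "\<dots> \<le> card K" by (rule card_image_le) fact
    finally show ?thesis .
  qed

  have cover_exists: "\<exists>n \<C>. finite \<C> \<and> card \<C> = n \<and> F \<subseteq> \<Union>\<C> \<and> (\<forall>A\<in>\<C>. bounded A \<and> diameter A \<le> r)" if assms: "bounded F" "r > 0" for F :: "(real \<times> real) set" and r :: real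
  proof -
    obtain M c where M: "F \<subseteq> cball c M" using assms(1) bounded_subset_cball by blast
    have "seq_compact (cball c M)" by (rule compact_imp_seq_compact) simp
    then obtain k where k: "finite k" "cball c M \<subseteq> (\<Union>x\<in>k. ball x (r/2))"
      using seq_compact_imp_totally_bounded[of "cball c M"] assms(2) by (meson half_gt_zero)
    show ?thesis
      apply (rule exI[of _ "card ((\<lambda>x. ball x (r/2)) ` k)"])
      apply (rule exI[of _ "(\<lambda>x. ball x (r/2)) ` k"])
      using k M assms(2) by (auto simp: diameter_ball)
  qed

  have cover_ge: "card P \<le> cover_number F r" if assms: "bounded F" "r > 0" "finite P" "P \<subseteq> F" and sep: "\<forall>p\<in>P. \<forall>q\<in>P. p \<noteq> q \<longrightarrow> dist p q > r" for F :: "(real \<times> real) set" and r :: real and P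
  proof -
    obtain \<C> where C: "finite \<C>" "card \<C> = cover_number F r" "F \<subseteq> \<Union>\<C>"
        "\<forall>A\<in>\<C>. bounded A \<and> diameter A \<le> r"
      using LeastI_ex[OF cover_exists[OF assms(1,2)]] unfolding cover_number_def by blast
    define \<phi> where "\<phi> p = (SOME A. A \<in> \<C> \<and> p \<in> A)" for p
    have \<phi>: "\<phi> p \<in> \<C> \<and> p \<in> \<phi> p" if "p \<in> P" for p
      unfolding \<phi>_def by (rule someI_ex) (use that assms(4) C(3) in blast)
    have "inj_on \<phi> P"
    proof (rule inj_onI)
      fix p q assume pq: "p \<in> P" "q \<in> P" "\<phi> p = \<phi> q"
      show "p = q"
      proof (rule ccontr)
        assume "p \<noteq> q"
        hence "dist p q > r" using sep pq by blast
        moreover have "dist p q \<le> diameter (\<phi> p)"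
          using \<phi>[OF pq(1)] \<phi>[OF pq(2)] pq(3) C(4) by (intro diameter_bounded_bound) auto
        moreover have "diameter (\<phi> p) \<le> r" using \<phi>[OF pq(1)] C(4) by blast
        ultimately show False by linarith
      qed
    qed
    hence "card P \<le> card \<C>" by (rule card_inj_on_le) (use \<phi> C(1) in auto)
    with C(2) show ?thesis by simp
  qed

  have dist_pair_le: "dist p q \<le> \<bar>fst p - fst q\<bar> + \<bar>snd p - snd q\<bar>" for p q :: "real \<times> real"
    using sqrt_sum_squares_le_sum_abs[of "fst p - fst q" "snd p - snd q"]
    by (cases p, cases q) (simp add: dist_Pair_Pair dist_real_def)

  have cell_range: "nat \<lfloor>(y - lo) / \<delta>\<rfloor> \<in> {0..nat \<lfloor>L / \<delta>\<rfloor>}" if assms: "\<delta> > 0" "lo \<le> y" "y \<le> lo + L" for y lo L \<delta> :: real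
  proof -
    have "(y - lo) / \<delta> \<le> L / \<delta>" using assms by (simp add: divide_right_mono)
    hence "\<lfloor>(y - lo) / \<delta>\<rfloor> \<le> \<lfloor>L / \<delta>\<rfloor>" by (rule floor_mono)
    thus ?thesis by auto
  qed

  have cell_close: "\<bar>y - y'\<bar> < \<delta>" if assms: "\<delta> > 0" "lo \<le> y" "lo \<le> y'" "nat \<lfloor>(y - lo) / \<delta>\<rfloor> = nat \<lfloor>(y' - lo) / \<delta>\<rfloor>" for y y' lo \<delta> :: real
  proof -
    have a: "0 \<le> \<lfloor>(y - lo) / \<delta>\<rfloor>" "0 \<le> \<lfloor>(y' - lo) / \<delta>\<rfloor>" using assms by simp_all
    have "\<lfloor>(y - lo) / \<delta>\<rfloor> = \<lfloor>(y' - lo) / \<delta>\<rfloor>" by (metis a assms(4) nat_0_le)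
    hence "\<bar>(y - lo) / \<delta> - (y' - lo) / \<delta>\<bar> < 1" by linarith
    hence "\<bar>(y - y') / \<delta>\<bar> < 1" by (simp add: diff_divide_distrib)
    thus ?thesis using assms(1) by (simp add: abs_divide pos_divide_less_eq)
  qed


  have nat_floor_le: "0 \<le> x \<Longrightarrow> real (nat \<lfloor>x\<rfloor>) \<le> x" for x :: real
    by (metis floor_less_zero int_ops(1) le_nat_floor nat_le_0 nat_le_iff_add nle_le of_nat_floor)

  have grid_bound: "real (cover_number (cball z R \<inter> E) r) \<le> 25 * (R / r)^2" if assms: "0 < r" "r \<le> R" for E :: "(real \<times> real) set" and z :: "real \<times> real" and r R :: real
  proof -
    define \<delta> where "\<delta> = r / 2"
    define n where "n = nat \<lfloor>(2 * R) / \<delta>\<rfloor>"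
    define A where "A = (\<lambda>(i::nat, j::nat). {p \<in> cball z R \<inter> E.
        nat \<lfloor>(fst p - (fst z - R)) / \<delta>\<rfloor> = i \<and> nat \<lfloor>(snd p - (snd z - R)) / \<delta>\<rfloor> = j})"
    have dpos: "\<delta> > 0" using assms by (simp add: \<delta>_def)
    have R0: "R > 0" using assms by linarith
    have fz: "\<bar>fst p - fst z\<bar> \<le> R" "\<bar>snd p - snd z\<bar> \<le> R" if "p \<in> cball z R" for p
      using that dist_fst_le[of p z] dist_snd_le[of p z] by (auto simp: dist_real_def dist_commute)
    have cov: "cball z R \<inter> E \<subseteq> (\<Union>k\<in>{0..n}\<times>{0..n}. A k)"
    proof
      fix p assume p: "p \<in> cball z R \<inter> E"
      have "nat \<lfloor>(fst p - (fst z - R)) / \<delta>\<rfloor> \<in> {0..n}" unfolding n_def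
        by (rule cell_range[OF dpos]) (use fz[of p] p in auto)
      moreover have "nat \<lfloor>(snd p - (snd z - R)) / \<delta>\<rfloor> \<in> {0..n}" unfolding n_def
        by (rule cell_range[OF dpos]) (use fz[of p] p in auto)
      ultimately show "p \<in> (\<Union>k\<in>{0..n}\<times>{0..n}. A k)" using p unfolding A_def by blast
    qed
    have cprop: "bounded (A k) \<and> diameter (A k) \<le> r" for k
    proof
      obtain i j where k: "k = (i, j)" by fastforce
      show "bounded (A k)" by (rule bounded_subset[of "cball z R"]) (auto simp: A_def k)
      show "diameter (A k) \<le> r"
      proof (rule diameter_le)
        show "A k \<noteq> {} \<or> 0 \<le> r" using assms by simp
        fix p q assume pq: "p \<in> A k" "q \<in> A k"
        have "\<bar>fst p - fst q\<bar> < \<delta>"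
          by (rule cell_close[OF dpos, of "fst z - R"]) (use pq fz[of p] fz[of q] in \<open>auto simp: A_def k\<close>)
        moreover have "\<bar>snd p - snd q\<bar> < \<delta>"
          by (rule cell_close[OF dpos, of "snd z - R"]) (use pq fz[of p] fz[of q] in \<open>auto simp: A_def k\<close>)
        ultimately have "dist p q \<le> r" using dist_pair_le[of p q] by (simp add: \<delta>_def)
        thus "norm (p - q) \<le> r" by (simp add: dist_norm)
      qed
    qed
    have "cover_number (cball z R \<inter> E) r \<le> card ({0..n}\<times>{0..n})"
      by (rule cover_le[OF _ cov]) (use cprop in auto)
    moreover have "card ({0..n}\<times>{0..n}) = (n+1)^2" by (simp add: card_cartesian_product power2_eq_square)
    ultimately have "real (cover_number (cball z R \<inter> E) r) \<le> real ((n+1)^2)" by (simp only: of_nat_le_iff)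
    hence "real (cover_number (cball z R \<inter> E) r) \<le> (real n + 1)^2" by (simp add: add.commute)
    also have "real n + 1 \<le> 5 * (R / r)"
    proof -
      have "real n \<le> 2 * R / \<delta>" unfolding n_def using R0 dpos by (intro nat_floor_le) simp
      also have "\<dots> = 4 * (R / r)" by (simp add: \<delta>_def)
      finally show ?thesis using assms by (simp add: field_simps)
    qed
    hence "(real n + 1)^2 \<le> (5 * (R / r))^2" by (intro power_mono) auto
    also have "(5 * (R / r))^2 = 25 * (R / r)^2" by (simp add: power2_eq_square)
    finally show ?thesis .
  qed

  have colip_bound: "real (cover_number (cball z R \<inter> graph_of I u) r) \<le> 5 * (R / r)" if assms: "0 < r" "r \<le> R" and colip: "\<forall>x\<in>I. \<forall>y\<in>I. \<bar>x - y\<bar> \<le> \<bar>u x - u y\<bar>" for z :: "real \<times> real" and u :: "real \<Rightarrow> real" and I and r R :: real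
  proof -
    define E where "E = graph_of I u"
    define \<delta> where "\<delta> = r / 2"
    define n where "n = nat \<lfloor>(2 * R) / \<delta>\<rfloor>"
    define A where "A = (\<lambda>j::nat. {p \<in> cball z R \<inter> E. nat \<lfloor>(snd p - (snd z - R)) / \<delta>\<rfloor> = j})"
    have dpos: "\<delta> > 0" using assms by (simp add: \<delta>_def)
    have R0: "R > 0" using assms by linarith
    have fz: "\<bar>fst p - fst z\<bar> \<le> R" "\<bar>snd p - snd z\<bar> \<le> R" if "p \<in> cball z R" for p
      using that dist_fst_le[of p z] dist_snd_le[of p z] by (auto simp: dist_real_def dist_commute)
    have cov: "cball z R \<inter> E \<subseteq> (\<Union>k\<in>{0..n}. A k)"
    proof
      fix p assume p: "p \<in> cball z R \<inter> E"
      have "nat \<lfloor>(snd p - (snd z - R)) / \<delta>\<rfloor> \<in> {0..n}" unfolding n_def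
        by (rule cell_range[OF dpos]) (use fz[of p] p in auto)
      thus "p \<in> (\<Union>k\<in>{0..n}. A k)" using p unfolding A_def by blast
    qed
    have cprop: "bounded (A k) \<and> diameter (A k) \<le> r" for k
    proof
      show "bounded (A k)" by (rule bounded_subset[of "cball z R"]) (auto simp: A_def)
      show "diameter (A k) \<le> r"
      proof (rule diameter_le)
        show "A k \<noteq> {} \<or> 0 \<le> r" using assms by simp
        fix p q assume pq: "p \<in> A k" "q \<in> A k"
        have s: "\<bar>snd p - snd q\<bar> < \<delta>"
          by (rule cell_close[OF dpos, of "snd z - R"]) (use pq fz[of p] fz[of q] in \<open>auto simp: A_def\<close>)
        obtain x y where xy: "x \<in> I" "y \<in> I" "p = (x, u x)" "q = (y, u y)"
          using pq by (auto simp: A_def E_def graph_of_def)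
        have "\<bar>fst p - fst q\<bar> < \<delta>" using s colip xy by force
        hence "dist p q \<le> r" using s dist_pair_le[of p q] by (simp add: \<delta>_def)
        thus "norm (p - q) \<le> r" by (simp add: dist_norm)
      qed
    qed
    have "cover_number (cball z R \<inter> E) r \<le> card {0..n}"
      by (rule cover_le[OF _ cov]) (use cprop in auto)
    hence "real (cover_number (cball z R \<inter> E) r) \<le> real n + 1" by simp
    also have "real n + 1 \<le> 5 * (R / r)"
    proof -
      have "real n \<le> 2 * R / \<delta>" unfolding n_def using R0 dpos by (intro nat_floor_le) simp
      also have "\<dots> = 4 * (R / r)" by (simp add: \<delta>_def)
      finally show ?thesis using assms by (simp add: field_simps)
    qed
    finally show ?thesis by (simp add: E_def)
  qed


  have spec_eq: "assouad_spectrum \<theta> E = Inf (spec_set \<theta> E)" for \<theta> E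
    by (simp add: assouad_spectrum_def spec_set_def)

  have r_facts: "0 < R powr (1 / \<theta>)" "R powr (1 / \<theta>) \<le> R" if assms: "0 < \<theta>" "\<theta> < 1" "0 < R" "R < 1" for \<theta> R :: real
  proof -
    show "0 < R powr (1 / \<theta>)" using assms by simp
    have "1 \<le> 1 / \<theta>" using assms by simp
    hence "R powr (1 / \<theta>) \<le> R powr 1" using assms by (intro powr_mono') auto
    thus "R powr (1 / \<theta>) \<le> R" using assms by simp
  qed

  have two_in: "2 \<in> spec_set \<theta> E" if assms: "0 < \<theta>" "\<theta> < 1" for \<theta> :: real and E
    unfolding spec_set_def
  proof (intro CollectI conjI exI[of _ 25] allI impI)
    fix R :: real and z assume Rz: "0 < R \<and> R < 1 \<and> z \<in> E"
    note rf = r_facts[OF assms, of R]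
    have "real (cover_number (cball z R \<inter> E) (R powr (1 / \<theta>))) \<le> 25 * (R / R powr (1 / \<theta>))^2"
      using rf Rz by (intro grid_bound) auto
    also have "(R / R powr (1 / \<theta>))^2 = (R / R powr (1 / \<theta>)) powr 2"
      using rf Rz by (subst powr_numeral) auto
    finally show "real (cover_number (cball z R \<inter> E) (R powr (1 / \<theta>))) \<le> 25 * (R / R powr (1 / \<theta>)) powr 2" .
  qed auto

  have one_in: "1 \<in> spec_set \<theta> (graph_of I u)" if assms: "0 < \<theta>" "\<theta> < 1" and colip: "\<forall>x\<in>I. \<forall>y\<in>I. \<bar>x - y\<bar> \<le> \<bar>u x - u y\<bar>" for \<theta> :: real and I u
    unfolding spec_set_def
  proof (intro CollectI conjI exI[of _ 5] allI impI)
    fix R :: real and z assume Rz: "0 < R \<and> R < 1 \<and> z \<in> graph_of I u"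
    note rf = r_facts[OF assms(1,2), of R]
    have "real (cover_number (cball z R \<inter> graph_of I u) (R powr (1 / \<theta>))) \<le> 5 * (R / R powr (1 / \<theta>))"
      using rf Rz colip by (intro colip_bound) auto
    also have "R / R powr (1 / \<theta>) = (R / R powr (1 / \<theta>)) powr 1"
      using rf Rz by simp
    finally show "real (cover_number (cball z R \<inter> graph_of I u) (R powr (1 / \<theta>))) \<le> 5 * (R / R powr (1 / \<theta>)) powr 1" .
  qed auto

  have spec_le_1: "assouad_spectrum \<theta> (graph_of I u) \<le> 1" if assms: "0 < \<theta>" "\<theta> < 1" and colip: "\<forall>x\<in>I. \<forall>y\<in>I. \<bar>x - y\<bar> \<le> \<bar>u x - u y\<bar>" for \<theta> :: real and I u
    unfolding spec_eq
    by (rule cInf_lower[OF one_in[OF assms colip]]) (auto simp: spec_set_def intro!: bdd_belowI[of _ 0])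


  have nat_floor_ge: "0 \<le> x \<Longrightarrow> x - 1 \<le> real (nat \<lfloor>x\<rfloor>)" for x :: real
    by linarith

  have sin_per: "sin (a + 2 * pi * real n) = sin a" for a :: real and n :: nat
  proof (induction n)
    case (Suc n)
    have "sin (a + 2 * pi * real (Suc n)) = sin ((a + 2 * pi * real n) + 2 * pi)"
      by (simp add: algebra_simps)
    also have "\<dots> = sin a" using Suc by simp
    finally show ?case .
  qed simp

  have sqrt_sep: "r < \<bar>sqrt u - sqrt u'\<bar>" if assms: "0 \<le> u" "0 \<le> u'" "pi \<le> \<bar>u - u'\<bar>" "sqrt u + sqrt u' \<le> 1 / r + 1" "0 < r" "r < 1" for u u' r :: real
  proof (rule ccontr)
    assume "\<not> r < \<bar>sqrt u - sqrt u'\<bar>"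
    hence le: "\<bar>sqrt u - sqrt u'\<bar> \<le> r" by simp
    have "u - u' = (sqrt u - sqrt u') * (sqrt u + sqrt u')"
      using assms by (simp add: algebra_simps)
    moreover have "0 \<le> sqrt u + sqrt u'" using assms by simp
    ultimately have "\<bar>u - u'\<bar> = \<bar>sqrt u - sqrt u'\<bar> * (sqrt u + sqrt u')" by (simp add: abs_mult)
    also have "\<dots> \<le> r * (1 / r + 1)"
      using le assms by (intro mult_mono) auto
    also have "\<dots> = 1 + r" using assms by (simp add: field_simps)
    finally have "pi \<le> 1 + r" using assms by linarith
    thus False using assms pi_gt3 by linarith
  qed

  have sin_lower: "2 \<le> \<gamma>" if th: "0 < \<theta>" "\<theta> < 1" and g: "\<gamma> \<in> spec_set \<theta> (graph_of {0..} (\<lambda>t. sin (t^2)))" for \<theta> \<gamma> :: real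
  proof (rule ccontr)
    define E where "E = graph_of {0..} (\<lambda>t::real. sin (t^2))"
    assume "\<not> 2 \<le> \<gamma>"
    hence g2: "\<gamma> < 2" by simp
    obtain C where C: "C > 0" and bound: "\<And>R z. 0 < R \<Longrightarrow> R < 1 \<Longrightarrow> z \<in> E \<Longrightarrow>
        real (cover_number (cball z R \<inter> E) (R powr (1 / \<theta>))) \<le> C * (R / R powr (1 / \<theta>)) powr \<gamma>"
      using g unfolding spec_set_def E_def by blast
    define X where "X = max (32 * pi) ((256 * pi * C + 1) powr (1 / (2 - \<gamma>)))"
    have X32: "32 * pi \<le> X" by (simp add: X_def)
    have X1: "1 < X" using X32 pi_gt3 by linarith
    have Xpow: "256 * pi * C + 1 \<le> X powr (2 - \<gamma>)"
    proof -
      have "256 * pi * C + 1 = ((256 * pi * C + 1) powr (1 / (2 - \<gamma>))) powr (2 - \<gamma>)"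
        using g2 C pi_gt_zero by (simp add: powr_powr)
      also have "\<dots> \<le> X powr (2 - \<gamma>)"
        using g2 by (intro powr_mono2) (auto simp: X_def)
      finally show ?thesis .
    qed
    define R where "R = X powr (- \<theta> / (1 - \<theta>))"
    have R0: "0 < R" using X1 by (simp add: R_def)
    have R1: "R < 1" unfolding R_def using X1 th by (intro powr_less_one) (auto simp: field_simps)
    define r where "r = R powr (1 / \<theta>)"
    have r0: "0 < r" using R0 by (simp add: r_def)
    have RrX: "R / r = X"
    proof -
      have "R / r = R powr 1 / R powr (1 / \<theta>)" using R0 by (simp add: r_def)
      also have "\<dots> = R powr (1 - 1 / \<theta>)" by (simp add: powr_diff)
      also have "\<dots> = X powr ((- \<theta> / (1 - \<theta>)) * (1 - 1 / \<theta>))" by (simp add: R_def powr_powr)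
      also have "(- \<theta> / (1 - \<theta>)) * (1 - 1 / \<theta>) = 1" using th by (simp add: field_simps)
      finally show ?thesis using X1 by simp
    qed
    have rX: "r * X = R" using RrX r0 by (simp add: field_simps)
    define w where "w = 1 / r"
    have w0: "0 < w" using r0 by (simp add: w_def)
    have rw: "r = 1 / w" using r0 by (simp add: w_def)
    have wX: "X \<le> w"
    proof -
      have "r * X \<le> r * w" using rX R1 rw w0 by (simp add: field_simps)
      thus ?thesis using r0 by simp
    qed
    have w32: "32 * pi \<le> w" using wX X32 by linarith
    have r1: "r < 1"
    proof -
      have "r * 1 < r * w" using w32 pi_gt3 r0 by (intro mult_strict_left_mono) auto
      thus ?thesis using rw w0 by simp
    qed
    define m where "m = nat \<lfloor>w^2 / (8 * pi)\<rfloor>"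
    define t0 where "t0 = sqrt (2 * pi * real m)"
    have m_up: "real m \<le> w^2 / (8 * pi)" unfolding m_def by (intro nat_floor_le) simp
    have m_lo: "w^2 / (8 * pi) - 1 \<le> real m" unfolding m_def by (intro nat_floor_ge) simp
    have t0sq: "t0^2 = 2 * pi * real m" by (simp add: t0_def)
    have t0_up: "t0 \<le> w / 2"
    proof -
      have "2 * pi * real m \<le> (w / 2)^2" using m_up pi_gt_zero by (simp add: field_simps power2_eq_square)
      hence "t0 \<le> sqrt ((w / 2)^2)" unfolding t0_def by (rule real_sqrt_le_mono)
      thus ?thesis using w0 by simp
    qed
    have t0_lo: "w / 4 \<le> t0"
    proof -
      have "w \<le> w^2" using w32 pi_gt3 by (simp add: power2_eq_square)
      hence "2 * pi * 16 \<le> 3 * w^2" using w32 pi_gt3 by linarith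
      hence "(w / 4)^2 \<le> 2 * pi * (w^2 / (8 * pi) - 1)" using pi_gt_zero by (simp add: field_simps power2_eq_square)
      also have "\<dots> \<le> 2 * pi * real m" using m_lo pi_gt_zero by (intro mult_left_mono) auto
      finally have "sqrt ((w / 4)^2) \<le> t0" unfolding t0_def by (rule real_sqrt_le_mono)
      thus ?thesis using w0 by simp
    qed
    have t0pos: "0 < t0" using t0_lo w0 by linarith
    have Rt0: "X / 4 \<le> R * t0"
    proof -
      have "R * (w / 4) \<le> R * t0" using t0_lo R0 by (intro mult_left_mono) auto
      moreover have "R * (w / 4) = X / 4" using rX rw w0 by (simp add: field_simps)
      ultimately show ?thesis by simp
    qed
    define z where "z = (t0, 0::real)"
    have zE: "z \<in> E"
    proof -
      have "sin (t0^2) = 0" using sin_per[of 0 m] by (simp add: t0sq)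
      thus ?thesis unfolding E_def graph_of_def z_def using t0pos
        by (intro image_eqI[of _ _ t0]) auto
    qed
    define J where "J = nat \<lfloor>R * t0 / (4 * pi)\<rfloor>"
    define K where "K = nat \<lfloor>X / 4\<rfloor>"
    define uu where "uu = (\<lambda>j i::nat. 2 * pi * (real m + real j) + arcsin (2 * r * real i))"
    define pt where "pt = (\<lambda>(j::nat, i::nat). (sqrt (uu j i), 2 * r * real i))"
    define Ix where "Ix = {1..J} \<times> {0..<K}"
    have yb: "0 \<le> 2 * r * real i \<and> 2 * r * real i \<le> R / 2" if "i < K" for i
    proof -
      have "real i \<le> X / 4" using that unfolding K_def using X1 nat_floor_le[of "X/4"] by linarith
      hence "2 * r * real i \<le> 2 * r * (X / 4)" using r0 by (intro mult_left_mono) auto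
      moreover have "2 * r * (X / 4) = (r * X) / 2" by simp
      moreover have "0 \<le> 2 * r * real i" using r0 by simp
      ultimately show ?thesis using rX by linarith
    qed
    have ab: "0 \<le> arcsin (2 * r * real i) \<and> arcsin (2 * r * real i) \<le> pi / 2" if "i < K" for i
      using yb[OF that] R1 arcsin_nonneg[of "2 * r * real i"] arcsin_bounded[of "2 * r * real i"] by auto
    have sinu: "sin (uu j i) = 2 * r * real i" if "i < K" for i j
    proof -
      have "sin (uu j i) = sin (arcsin (2 * r * real i) + 2 * pi * real (m + j))"
        by (simp add: uu_def algebra_simps)
      also have "\<dots> = sin (arcsin (2 * r * real i))" by (rule sin_per)
      also have "\<dots> = 2 * r * real i" using yb[OF that] R1 by (intro sin_arcsin) auto
      finally show ?thesis .
    qed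
    have u0: "t0^2 \<le> uu j i" if "i < K" for i j
      using ab[OF that] pi_gt_zero by (simp add: uu_def t0sq algebra_simps)
    have JR: "real J \<le> R * t0 / (4 * pi)" unfolding J_def
      using R0 t0pos pi_gt_zero by (intro nat_floor_le) simp
    have JR2: "R * t0 / (4 * pi) - 1 \<le> real J" unfolding J_def
      using R0 t0pos pi_gt_zero by (intro nat_floor_ge) simp
    have uJ: "uu j i \<le> t0^2 + R * t0" if "i < K" "j \<le> J" for i j
    proof -
      have "real j \<le> R * t0 / (4 * pi)" using that(2) JR by (meson of_nat_le_iff order_trans)
      hence "2 * pi * real j \<le> R * t0 / 2" using pi_gt_zero by (simp add: field_simps)
      moreover have "pi \<le> R * t0" using Rt0 X32 pi_gt_zero by linarith
      ultimately show ?thesis using ab[OF that(1)] by (simp add: uu_def t0sq algebra_simps)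
    qed
    have xb: "t0 \<le> sqrt (uu j i) \<and> sqrt (uu j i) \<le> t0 + R / 2" if "i < K" "j \<le> J" for i j
    proof -
      define x where "x = sqrt (uu j i)"
      have u00: "0 \<le> uu j i" using u0[OF that(1), of j] by (meson order_trans zero_le_power2)
      have x2: "x^2 = uu j i" using u00 by (simp add: x_def)
      have "t0 \<le> x" unfolding x_def using u0[OF that(1), of j] t0pos by (simp add: real_le_rsqrt)
      moreover have "x - t0 \<le> R / 2"
      proof -
        have "(x - t0) * (2 * t0) \<le> (x - t0) * (x + t0)" using \<open>t0 \<le> x\<close> by (intro mult_left_mono) auto
        also have "\<dots> = x^2 - t0^2" by (simp add: algebra_simps power2_eq_square)
        also have "\<dots> \<le> R * t0" using uJ[OF that] x2 by simp
        finally have "(x - t0) * (2 * t0) \<le> (R / 2) * (2 * t0)" by simp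
        thus ?thesis using t0pos by simp
      qed
      ultimately show ?thesis by (simp add: x_def)
    qed
    have ptE: "pt a \<in> cball z R \<inter> E" if aI: "a \<in> Ix" for a
    proof -
      obtain j i where a: "a = (j, i)" "i < K" "1 \<le> j" "j \<le> J" using aI by (cases a) (auto simp: Ix_def)
      have u00: "0 \<le> uu j i" using u0[OF a(2), of j] by (meson order_trans zero_le_power2)
      have inE: "pt a \<in> E" unfolding E_def graph_of_def a pt_def
        using u00 sinu[OF a(2)] by (intro image_eqI[of _ _ "sqrt (uu j i)"]) auto
      have "dist z (pt a) \<le> \<bar>fst z - fst (pt a)\<bar> + \<bar>snd z - snd (pt a)\<bar>" by (rule dist_pair_le)
      also have "\<dots> \<le> R / 2 + R / 2" using xb[OF a(2) a(4)] yb[OF a(2)] by (simp add: z_def pt_def a)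
      finally show ?thesis using inE by simp
    qed
    have sep: "r < dist (pt a) (pt b)" if abI: "a \<in> Ix" "b \<in> Ix" "a \<noteq> b" for a b
    proof -
      obtain j i where a: "a = (j, i)" "i < K" "1 \<le> j" "j \<le> J" using abI by (cases a) (auto simp: Ix_def)
      obtain j' i' where b: "b = (j', i')" "i' < K" "1 \<le> j'" "j' \<le> J" using abI by (cases b) (auto simp: Ix_def)
      show ?thesis
      proof (cases "j = j'")
        case True
        hence "i \<noteq> i'" using abI a b by auto
        hence "1 \<le> \<bar>real i - real i'\<bar>" by linarith
        hence "2 * r * 1 \<le> 2 * r * \<bar>real i - real i'\<bar>" using r0 by (intro mult_left_mono) auto
        also have "\<dots> = \<bar>2 * r * real i - 2 * r * real i'\<bar>"
        proof -
          have "2 * r * real i - 2 * r * real i' = (2 * r) * (real i - real i')" by (simp add: algebra_simps)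
          thus ?thesis using r0 by (simp add: abs_mult)
        qed
        also have "\<dots> = \<bar>snd (pt a) - snd (pt b)\<bar>" by (simp add: pt_def a b)
        also have "\<dots> \<le> dist (pt a) (pt b)" using dist_snd_le[of "pt a" "pt b"] by (simp add: dist_real_def)
        finally show ?thesis using r0 by simp
      next
        case False
        have "pi \<le> \<bar>uu j i - uu j' i'\<bar>"
        proof (cases "j < j'")
          case True
          hence "1 \<le> real j' - real j" by linarith
          hence m1: "2 * pi * 1 \<le> 2 * pi * (real j' - real j)" using pi_gt_zero by (intro mult_left_mono) auto
          have "uu j' i' - uu j i = 2 * pi * (real j' - real j) + (arcsin (2 * r * real i') - arcsin (2 * r * real i))"
            by (simp add: uu_def algebra_simps)
          thus ?thesis using m1 ab[OF a(2)] ab[OF b(2)] by linarith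
        next
          case False
          hence "1 \<le> real j - real j'" using \<open>j \<noteq> j'\<close> by linarith
          hence m1: "2 * pi * 1 \<le> 2 * pi * (real j - real j')" using pi_gt_zero by (intro mult_left_mono) auto
          have "uu j i - uu j' i' = 2 * pi * (real j - real j') + (arcsin (2 * r * real i) - arcsin (2 * r * real i'))"
            by (simp add: uu_def algebra_simps)
          thus ?thesis using m1 ab[OF a(2)] ab[OF b(2)] by linarith
        qed
        moreover have "sqrt (uu j i) + sqrt (uu j' i') \<le> 1 / r + 1"
          using xb[OF a(2) a(4)] xb[OF b(2) b(4)] t0_up R1 w_def by linarith
        moreover have "0 \<le> uu j i" using u0[OF a(2), of j] by (meson order_trans zero_le_power2)
        moreover have "0 \<le> uu j' i'" using u0[OF b(2), of j'] by (meson order_trans zero_le_power2)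
        ultimately have "r < \<bar>sqrt (uu j i) - sqrt (uu j' i')\<bar>" using r0 r1 by (intro sqrt_sep) auto
        also have "\<dots> = \<bar>fst (pt a) - fst (pt b)\<bar>" by (simp add: pt_def a b)
        also have "\<dots> \<le> dist (pt a) (pt b)" using dist_fst_le[of "pt a" "pt b"] by (simp add: dist_real_def)
        finally show ?thesis .
      qed
    qed
    have inj: "inj_on pt Ix"
    proof (rule inj_onI)
      fix a b assume "a \<in> Ix" "b \<in> Ix" "pt a = pt b"
      thus "a = b" using sep[of a b] r0 by fastforce
    qed
    have cardP: "card (pt ` Ix) = J * K"
      using card_image[OF inj] by (simp add: Ix_def card_cartesian_product)
    have Jlo: "X / (32 * pi) \<le> real J"
    proof -
      have "X / (16 * pi) \<le> R * t0 / (4 * pi)" using Rt0 pi_gt_zero by (simp add: field_simps)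
      moreover have "X / (32 * pi) + 1 \<le> X / (16 * pi)" using X32 pi_gt_zero by (simp add: field_simps)
      ultimately show ?thesis using JR2 by linarith
    qed
    have Klo: "X / 8 \<le> real K"
    proof -
      have "X / 4 - 1 \<le> real K" unfolding K_def using X1 by (intro nat_floor_ge) simp
      thus ?thesis using X32 pi_gt3 by linarith
    qed
    have "X / (32 * pi) * (X / 8) \<le> real J * real K"
      using Jlo Klo X1 pi_gt_zero by (intro mult_mono) auto
    hence low: "X^2 / (256 * pi) \<le> real (card (pt ` Ix))" using cardP by (simp add: power2_eq_square field_simps)
    have "card (pt ` Ix) \<le> cover_number (cball z R \<inter> E) r"
    proof (rule cover_ge)
      show "bounded (cball z R \<inter> E)" by auto
      show "0 < r" by fact
      show "finite (pt ` Ix)" by (simp add: Ix_def)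
      show "pt ` Ix \<subseteq> cball z R \<inter> E" using ptE by auto
      show "\<forall>p\<in>pt ` Ix. \<forall>q\<in>pt ` Ix. p \<noteq> q \<longrightarrow> r < dist p q"
      proof (intro ballI impI)
        fix p q assume "p \<in> pt ` Ix" "q \<in> pt ` Ix" "p \<noteq> q"
        then obtain a b where "a \<in> Ix" "b \<in> Ix" "p = pt a" "q = pt b" "a \<noteq> b" by blast
        thus "r < dist p q" using sep by blast
      qed
    qed
    hence "real (card (pt ` Ix)) \<le> real (cover_number (cball z R \<inter> E) r)" by simp
    also have "\<dots> \<le> C * X powr \<gamma>" using bound[OF R0 R1 zE] RrX by (simp add: r_def)
    finally have A: "X^2 / (256 * pi) \<le> C * X powr \<gamma>" using low by linarith
    have "X^2 = X powr (2 - \<gamma>) * X powr \<gamma>" using X1 by (simp add: powr_add[symmetric] powr_numeral)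
    also have "\<dots> \<ge> (256 * pi * C + 1) * X powr \<gamma>" using Xpow by (intro mult_right_mono) auto
    finally have D: "(256 * pi * C + 1) * X powr \<gamma> \<le> X^2" .
    have B: "X^2 \<le> 256 * pi * (C * X powr \<gamma>)" using A pi_gt_zero by (simp add: pos_divide_le_eq mult.commute)
    have "(256 * pi * C + 1) * X powr \<gamma> = 256 * pi * (C * X powr \<gamma>) + X powr \<gamma>" by (simp add: algebra_simps)
    moreover have "0 < X powr \<gamma>" using X1 by simp
    ultimately show False using B D by linarith
  qed


  have sin_lip: "\<bar>sin a - sin b\<bar> \<le> \<bar>a - b\<bar>" for a b :: real
  proof -
    have "\<bar>sin a - sin b\<bar> = 2 * \<bar>sin ((a - b) / 2)\<bar> * \<bar>cos ((a + b) / 2)\<bar>"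
      by (simp add: sin_diff_sin abs_mult)
    also have "\<dots> \<le> 2 * \<bar>sin ((a - b) / 2)\<bar> * 1" by (intro mult_left_mono) auto
    also have "\<dots> \<le> 2 * \<bar>(a - b) / 2\<bar>" using abs_sin_x_le_abs_x[of "(a - b) / 2"] by simp
    finally show ?thesis by simp
  qed

  have colip_sym: "\<forall>x\<in>{0..}. \<forall>y\<in>{0..}. \<bar>x - y\<bar> \<le> \<bar>u x - u y\<bar>" if assms: "\<And>x y. 0 \<le> x \<Longrightarrow> x \<le> y \<Longrightarrow> y - x \<le> \<bar>u y - u x\<bar>" for u :: "real \<Rightarrow> real"
  proof (intro ballI)
    fix x y :: real assume "x \<in> {0..}" "y \<in> {0..}"
    thus "\<bar>x - y\<bar> \<le> \<bar>u x - u y\<bar>"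
      using assms[of x y] assms[of y x] by (cases "x \<le> y") (auto simp: abs_minus_commute)
  qed

  define g where "g = (\<lambda>t::real. sin (t^2) + t^2 + t)"
  define h where "h = (\<lambda>t::real. - (t^2 + t))"
  have gl: "\<forall>x\<in>{0..}. \<forall>y\<in>{0..}. \<bar>x - y\<bar> \<le> \<bar>g x - g y\<bar>"
  proof (rule colip_sym)
    fix x y :: real assume xy: "0 \<le> x" "x \<le> y"
    have "x^2 \<le> y^2" using xy by (intro power_mono) auto
    moreover have "\<bar>sin (y^2) - sin (x^2)\<bar> \<le> \<bar>y^2 - x^2\<bar>" by (rule sin_lip)
    ultimately have "y - x \<le> g y - g x" unfolding g_def by linarith
    thus "y - x \<le> \<bar>g y - g x\<bar>" by linarith
  qed
  have hl: "\<forall>x\<in>{0..}. \<forall>y\<in>{0..}. \<bar>x - y\<bar> \<le> \<bar>h x - h y\<bar>"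
  proof (rule colip_sym)
    fix x y :: real assume xy: "0 \<le> x" "x \<le> y"
    have "x^2 \<le> y^2" using xy by (intro power_mono) auto
    hence "y - x \<le> h x - h y" unfolding h_def by linarith
    thus "y - x \<le> \<bar>h y - h x\<bar>" by linarith
  qed
  have sum: "(\<lambda>t. g t + h t) = (\<lambda>t. sin (t^2))" by (simp add: g_def h_def fun_eq_iff)
  have s2: "2 \<le> assouad_spectrum \<theta> (graph_of {0..} (\<lambda>t. sin (t^2)))"
    unfolding spec_eq
    by (rule cInf_greatest) (use two_in[OF assms] sin_lower[OF assms] in auto)
  have "assouad_spectrum \<theta> (graph_of {0..} g) \<le> 1" by (rule spec_le_1[OF assms gl])
  moreover have "assouad_spectrum \<theta> (graph_of {0..} h) \<le> 1" by (rule spec_le_1[OF assms hl])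
  ultimately have "max (assouad_spectrum \<theta> (graph_of {0..} g)) (assouad_spectrum \<theta> (graph_of {0..} h))
      < assouad_spectrum \<theta> (graph_of {0..} (\<lambda>t. g t + h t))"
    using s2 sum by simp
  moreover have "is_interval {0::real..}" by (simp add: is_interval_ci)
  moreover have "continuous_on {0..} g" "continuous_on {0..} h"
    unfolding g_def h_def by (auto intro!: continuous_intros)
  ultimately show ?thesis by blast
qed

end
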